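(* In the setting described in the context, assume $x_h^2\beta>3$ and $n>\max\{\frac1{2\alpha x_h^2\beta}-\frac1{x_h^2\beta},\ \frac\alpha{x_h^2\beta},\ \frac\alpha{x_h^2\beta}(e^{\frac2{x_h^2\beta}}-2)+\frac1{2x_h^2\beta}\}$, and let $\dot k=\frac1{2n}\log_\lambda\Big(\frac1{1+\frac1{\alpha\eta}(1-\lambda^2)}\Big)-1$. Then for every $r\in\{1,\dots,n\}$, $$\frac{(\mu_{\lceil\dot k\rceil n+n}-\hat\mu^r_{\lceil\dot k\rceil n+n})^2}{(\hat\sigma^r_{\lceil\dot k\rceil n+n})^2}\ge e^{-\frac2{x_h^2\beta}}\frac\alpha{v_1}\Big(\frac3{32x_h^2\beta}\Big)^2\Big(\frac cn\Big)^2,\qquad v_1=\max\{6,1+2e^{\frac1{x_h^2\beta}}\}.$$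
   Context: Fix $\alpha,\beta,x_h,c>0$ and an integer $n\ge2$. Model: $y=\theta x+\xi$, $\xi\sim\mathcal N(0,\beta^{-1})$, prior $\theta\sim\mathcal N(0,\alpha^{-1})$. Databases: $D_1$ consists of $n$ copies of $(x_h,cx_h)$; $D_2$ consists of $n-1$ copies of $(x_h,cx_h)$ and one copy of $(x_h/2,cx_h/2)$. Cyclic SGLD with batch size 1 and step size $\eta=\frac2{(\alpha+nx_h^2\beta)^2}$: $\theta_0\sim\mathcal N(0,\alpha^{-1})$, $\theta_{j+1}=\theta_j+\frac\eta2[-\alpha\theta_j+n\beta(y_{i_j}-\theta_jx_{i_j})x_{i_j}]+\sqrt\eta\,\xi_j$ with $\xi_j\sim\mathcal N(0,1)$ i.i.d. independent of $\theta_0$; the database is shuffled once uniformly and its samples are then used cyclically. On $D_1$ the $j$-th iterate is $\mathcal N(\mu_j,\sigma_j^2)$. On $D_2$ let $r\in\{1,\dots,n\}$ be the position within each epoch at which $(x_h/2,cx_h/2)$ is used; conditionally on $r$ the $j$-th iterate is $\hat\theta^r_j\sim\mathcal N(\hat\mu^r_j,(\hat\sigma^r_j)^2)$. Set $\lambda=1-\frac\eta2(\alpha+nx_h^2\beta)$, $\hat\lambda=1-\frac\eta2(\alpha+n\frac{x_h^2}4\beta)$. *)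

theory Defs
  imports Complex_Main
begin

text \<open>Cyclic SGLD for Bayesian linear regression y = theta x + xi, xi ~ N(0, 1/beta),
  prior theta ~ N(0, 1/alpha). Since the initial iterate and all noises are Gaussian and the
  update is affine, each iterate is Gaussian; its mean and variance obey the affine recursions
  below (theta_0 ~ N(0,1/alpha)).\<close>

definition sgld_eta :: "real \<Rightarrow> real \<Rightarrow> real \<Rightarrow> nat \<Rightarrow> real" where
  "sgld_eta alpha beta xh n = 2 / (alpha + real n * xh^2 * beta)^2"

definition sgld_lambda :: "real \<Rightarrow> real \<Rightarrow> real \<Rightarrow> nat \<Rightarrow> real" where
  "sgld_lambda alpha beta xh n =
     1 - sgld_eta alpha beta xh n / 2 * (alpha + real n * xh^2 * beta)"

definition sgld_lambda_hat :: "real \<Rightarrow> real \<Rightarrow> real \<Rightarrow> nat \<Rightarrow> real" where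
  "sgld_lambda_hat alpha beta xh n =
     1 - sgld_eta alpha beta xh n / 2 * (alpha + real n * (xh^2 / 4) * beta)"

text \<open>Database D1: n copies of (xh, c xh). Mean mu_j and variance sigma_j^2 of the j-th iterate.\<close>

primrec mu1 :: "real \<Rightarrow> real \<Rightarrow> real \<Rightarrow> real \<Rightarrow> nat \<Rightarrow> nat \<Rightarrow> real" where
  "mu1 alpha beta xh c n 0 = 0"
| "mu1 alpha beta xh c n (Suc j) =
     sgld_lambda alpha beta xh n * mu1 alpha beta xh c n j
     + sgld_eta alpha beta xh n / 2 * real n * beta * c * xh^2"

primrec var1 :: "real \<Rightarrow> real \<Rightarrow> real \<Rightarrow> nat \<Rightarrow> nat \<Rightarrow> real" where
  "var1 alpha beta xh n 0 = 1 / alpha"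
| "var1 alpha beta xh n (Suc j) =
     (sgld_lambda alpha beta xh n)^2 * var1 alpha beta xh n j + sgld_eta alpha beta xh n"

text \<open>Database D2: the point (xh/2, c xh/2) is used at position r (1 <= r <= n) of every epoch,
  i.e. the step from iterate j to iterate j+1 uses it iff (j mod n) + 1 = r.\<close>

definition small_step :: "nat \<Rightarrow> nat \<Rightarrow> nat \<Rightarrow> bool" where
  "small_step n r j \<longleftrightarrow> j mod n + 1 = r"

primrec mu2 :: "real \<Rightarrow> real \<Rightarrow> real \<Rightarrow> real \<Rightarrow> nat \<Rightarrow> nat \<Rightarrow> nat \<Rightarrow> real" where
  "mu2 alpha beta xh c n r 0 = 0"
| "mu2 alpha beta xh c n r (Suc j) =
     (if small_step n r j
      then sgld_lambda_hat alpha beta xh n * mu2 alpha beta xh c n r j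
           + sgld_eta alpha beta xh n / 2 * real n * beta * (c * xh / 2) * (xh / 2)
      else sgld_lambda alpha beta xh n * mu2 alpha beta xh c n r j
           + sgld_eta alpha beta xh n / 2 * real n * beta * c * xh^2)"

primrec var2 :: "real \<Rightarrow> real \<Rightarrow> real \<Rightarrow> nat \<Rightarrow> nat \<Rightarrow> nat \<Rightarrow> real" where
  "var2 alpha beta xh n r 0 = 1 / alpha"
| "var2 alpha beta xh n r (Suc j) =
     (if small_step n r j then (sgld_lambda_hat alpha beta xh n)^2 else (sgld_lambda alpha beta xh n)^2)
       * var2 alpha beta xh n r j + sgld_eta alpha beta xh n"

end

theory Submission
  imports Defs
begin

lemma e_step:
  "c - mu2 a b xh c n r (Suc j) =
     (if small_step n r j then sgld_lambda_hat a b xh n else sgld_lambda a b xh n) * (c - mu2 a b xh c n r j)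
     + c * sgld_eta a b xh n * a / 2"
  by (simp add: sgld_lambda_def sgld_lambda_hat_def algebra_simps power2_eq_square)

lemma d_step:
  "mu1 a b xh c n (Suc j) - mu2 a b xh c n r (Suc j) =
     sgld_lambda a b xh n * (mu1 a b xh c n j - mu2 a b xh c n r j)
     + (if small_step n r j then 3/8 * sgld_eta a b xh n * n * (xh^2*b) * (c - mu2 a b xh c n r j) else 0)"
  by (cases "small_step n r j") (simp_all add: sgld_lambda_def sgld_lambda_hat_def field_simps power2_eq_square)

lemma basics:
  assumes "a > 0" "b > 0" "xh > 0" "n \<ge> 2" "xh^2*b > 3"
  defines "M \<equiv> a + real n * xh^2 * b"
  shows "sgld_eta a b xh n = 2 / M^2" "sgld_lambda a b xh n = 1 - 1/M"
    "sgld_lambda_hat a b xh n = 1 - (a + real n * xh^2 * b / 4) / M^2"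
    "M > 6" "real n * xh^2 * b > 6"
proof -
  have A: "real n * (xh^2 * b) \<ge> 2 * (xh^2*b)" using assms(4) assms(5)
    by (intro mult_right_mono) auto
  show "real n * xh^2 * b > 6" using A assms(5) by (simp add: mult.assoc)
  then show "M > 6" using assms(1) by (simp add: M_def)
  show e: "sgld_eta a b xh n = 2 / M^2" by (simp add: sgld_eta_def M_def)
  have "M > 0" using \<open>M > 6\<close> by simp
  then show "sgld_lambda a b xh n = 1 - 1/M"
  proof -
    have "sgld_lambda a b xh n = 1 - sgld_eta a b xh n / 2 * M" by (simp add: sgld_lambda_def M_def)
    then show ?thesis using \<open>M > 0\<close> by (simp add: e power2_eq_square)
  qed
  show "sgld_lambda_hat a b xh n = 1 - (a + real n * xh^2 * b / 4) / M^2"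
    by (simp add: sgld_lambda_hat_def e power2_eq_square field_simps)
qed

lemma order_facts:
  assumes "a > 0" "b > 0" "xh > 0" "n \<ge> 2" "xh^2*b > 3"
  shows "0 < sgld_eta a b xh n" "0 < sgld_lambda a b xh n" "sgld_lambda a b xh n \<le> sgld_lambda_hat a b xh n"
    "sgld_lambda_hat a b xh n < 1" "sgld_lambda_hat a b xh n \<ge> 5/6"
proof -
  define M where "M = a + real n * xh^2 * b"
  note B = basics[OF assms, folded M_def]
  have M6: "M > 6" using B by simp
  have nA: "real n * xh^2 * b > 0" using B by simp
  show "0 < sgld_eta a b xh n" using B M6 by simp
  show "0 < sgld_lambda a b xh n" using B M6 by simp
  have q: "(a + real n * xh^2 * b / 4) / M^2 \<le> 1/M"
  proof -
    have "a + real n * xh^2 * b / 4 \<le> M" using nA unfolding M_def by linarith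
    then have "(a + real n * xh^2 * b / 4) / M^2 \<le> M / M^2" using M6 by (intro divide_right_mono) auto
    then show ?thesis using M6 by (simp add: power2_eq_square)
  qed
  show "sgld_lambda a b xh n \<le> sgld_lambda_hat a b xh n" using B q by simp
  have "(a + real n * xh^2 * b / 4) / M^2 > 0" using nA assms(1) M6 by simp
  then show "sgld_lambda_hat a b xh n < 1" using B by simp
  have "1/M \<le> 1/6" using M6 by (simp add: field_simps)
  then show "sgld_lambda_hat a b xh n \<ge> 5/6" using B(3) q by linarith
qed

definition pp :: "real \<Rightarrow> real \<Rightarrow> real \<Rightarrow> nat \<Rightarrow> nat \<Rightarrow> nat \<Rightarrow> real" where
  "pp a b xh n r j = (\<Prod>i<j. if small_step n r i then sgld_lambda_hat a b xh n else sgld_lambda a b xh n)"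

context
  fixes a b xh c :: real and n r :: nat
  assumes ha: "a > 0" and hb: "b > 0" and hc: "c > 0" and he: "0 < sgld_eta a b xh n"
    and hl: "0 < sgld_lambda a b xh n" and hll: "sgld_lambda a b xh n \<le> sgld_lambda_hat a b xh n"
    and hl1: "sgld_lambda_hat a b xh n < 1"
begin

abbreviation "fct j \<equiv> (if small_step n r j then sgld_lambda_hat a b xh n else sgld_lambda a b xh n)"

lemma pp_Suc: "pp a b xh n r (Suc j) = fct j * pp a b xh n r j"
  by (simp add: pp_def)

lemma fct_pos: "0 < fct j" and fct_le1: "fct j < 1" and fct_ge: "sgld_lambda a b xh n \<le> fct j"
  and fct_le: "fct j \<le> sgld_lambda_hat a b xh n"
  using hl hll hl1 by auto

lemma pp_pos: "0 < pp a b xh n r j"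
  by (induction j) (simp_all add: pp_def fct_pos)

lemma pp_mono: "pp a b xh n r (j + m) \<le> pp a b xh n r j"
proof (induction m)
  case 0 then show ?case by simp
next
  case (Suc m)
  have "pp a b xh n r (j + Suc m) = fct (j+m) * pp a b xh n r (j + m)" by (simp add: pp_Suc)
  also have "\<dots> \<le> 1 * pp a b xh n r (j + m)"
    using fct_le1[of "j+m"] pp_pos[of "j+m"] by (intro mult_right_mono) auto
  finally show ?case using Suc by simp
qed

lemma pp_ge: "sgld_lambda a b xh n ^ j \<le> pp a b xh n r j"
proof (induction j)
  case 0 then show ?case by (simp add: pp_def)
next
  case (Suc j)
  have "sgld_lambda a b xh n ^ Suc j = sgld_lambda a b xh n * sgld_lambda a b xh n ^ j" by simp
  also have "\<dots> \<le> fct j * pp a b xh n r j"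
    using Suc fct_ge[of j] hl by (intro mult_mono) auto
  finally show ?case by (simp add: pp_Suc)
qed

lemma e_ge: "c * pp a b xh n r j \<le> c - mu2 a b xh c n r j"
proof (induction j)
  case 0 then show ?case by (simp add: pp_def)
next
  case (Suc j)
  have "c * pp a b xh n r (Suc j) = fct j * (c * pp a b xh n r j)" by (simp add: pp_Suc)
  also have "\<dots> \<le> fct j * (c - mu2 a b xh c n r j)"
    using Suc fct_pos[of j] by (intro mult_left_mono) auto
  also have "\<dots> \<le> fct j * (c - mu2 a b xh c n r j) + c * sgld_eta a b xh n * a / 2"
    using hc he ha by simp
  finally show ?case by (simp only: e_step)
qed

lemma e_nonneg: "0 \<le> c - mu2 a b xh c n r j"
  using e_ge[of j] pp_pos[of j] hc by (smt (verit) mult_pos_pos)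

lemma d_nonneg: "0 \<le> mu1 a b xh c n j - mu2 a b xh c n r j"
proof (induction j)
  case 0 then show ?case by simp
next
  case (Suc j)
  have "0 \<le> 3/8 * sgld_eta a b xh n * n * (xh^2*b) * (c - mu2 a b xh c n r j)"
    using he e_nonneg[of j] hb by (intro mult_nonneg_nonneg) auto
  then show ?case using Suc hl by (simp only: d_step) (auto intro: add_nonneg_nonneg)
qed

lemma d_mono: "sgld_lambda a b xh n ^ m * (mu1 a b xh c n j - mu2 a b xh c n r j)
   \<le> mu1 a b xh c n (j+m) - mu2 a b xh c n r (j+m)"
proof (induction m)
  case 0 then show ?case by simp
next
  case (Suc m)
  have "0 \<le> (if small_step n r (j+m) then 3/8 * sgld_eta a b xh n * n * (xh^2*b) * (c - mu2 a b xh c n r (j+m)) else 0)"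
    using he e_nonneg[of "j+m"] hb by (auto intro!: mult_nonneg_nonneg)
  then have "sgld_lambda a b xh n * (mu1 a b xh c n (j+m) - mu2 a b xh c n r (j+m))
     \<le> mu1 a b xh c n (j + Suc m) - mu2 a b xh c n r (j + Suc m)"
    by (simp only: add_Suc_right d_step)
  moreover have "sgld_lambda a b xh n ^ Suc m * (mu1 a b xh c n j - mu2 a b xh c n r j)
     \<le> sgld_lambda a b xh n * (mu1 a b xh c n (j+m) - mu2 a b xh c n r (j+m))"
    using Suc hl by (simp add: mult.assoc)
  ultimately show ?case by linarith
qed

lemma d_small: "small_step n r j \<Longrightarrow>
  3/8 * sgld_eta a b xh n * n * (xh^2*b) * (c - mu2 a b xh c n r j) \<le> mu1 a b xh c n (Suc j) - mu2 a b xh c n r (Suc j)"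
  using d_nonneg[of j] hl by (simp only: d_step) simp

lemma lh_sq: "0 < 1 - sgld_lambda_hat a b xh n ^ 2"
proof -
  have "sgld_lambda_hat a b xh n * sgld_lambda_hat a b xh n < 1 * 1"
    by (rule mult_strict_mono) (use hl hll hl1 in auto)
  then show ?thesis by (simp add: power2_eq_square)
qed

lemma var_le: "var2 a b xh n r j \<le> pp a b xh n r j ^ 2 / a + sgld_eta a b xh n / (1 - sgld_lambda_hat a b xh n ^ 2)"
proof (induction j)
  case 0
  have "0 \<le> sgld_eta a b xh n / (1 - sgld_lambda_hat a b xh n ^ 2)" using he lh_sq by simp
  then show ?case by (simp add: pp_def)
next
  case (Suc j)
  define V where "V = sgld_eta a b xh n / (1 - sgld_lambda_hat a b xh n ^ 2)"
  have V0: "0 \<le> V" using he lh_sq by (simp add: V_def)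
  have VV: "sgld_lambda_hat a b xh n ^ 2 * V + sgld_eta a b xh n = V"
    using lh_sq by (simp add: V_def field_simps)
  have vs: "var2 a b xh n r (Suc j) = fct j ^ 2 * var2 a b xh n r j + sgld_eta a b xh n"
    by (cases "small_step n r j") simp_all
  have f2: "fct j ^ 2 \<le> sgld_lambda_hat a b xh n ^ 2"
    using fct_pos[of j] fct_le[of j] by (intro power_mono) auto
  have "fct j ^ 2 * var2 a b xh n r j \<le> fct j ^ 2 * (pp a b xh n r j ^ 2 / a + V)"
    using Suc by (intro mult_left_mono) (auto simp: V_def)
  also have "\<dots> = pp a b xh n r (Suc j) ^ 2 / a + fct j ^ 2 * V"
    by (simp add: pp_Suc power_mult_distrib field_simps)
  also have "\<dots> \<le> pp a b xh n r (Suc j) ^ 2 / a + sgld_lambda_hat a b xh n ^ 2 * V"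
    using f2 V0 by (intro add_left_mono mult_right_mono) auto
  finally have X: "fct j ^ 2 * var2 a b xh n r j \<le> pp a b xh n r (Suc j) ^ 2 / a + sgld_lambda_hat a b xh n ^ 2 * V" .
  show ?case unfolding vs V_def[symmetric] using X VV by linarith
qed

lemma var_pos: "0 < var2 a b xh n r j"
proof (induction j)
  case 0 then show ?case using ha by simp
next
  case (Suc j)
  have "var2 a b xh n r (Suc j) = fct j ^ 2 * var2 a b xh n r j + sgld_eta a b xh n"
    by (cases "small_step n r j") simp_all
  moreover have "0 \<le> fct j ^ 2 * var2 a b xh n r j" using Suc by simp
  ultimately show ?case using he by linarith
qed

end

lemma poly_bound:
  fixes x L :: real
  assumes "0 < x" "x < 1/3" "1 - x \<le> L"
  shows "1 \<le> 4 * L^4 * (1 + 2*x)"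
proof -
  have a: "(1-x)^2 * (1+2*x) \<ge> 2/3"
  proof -
    have "(1-x)^2 * (1+2*x) = 1 - 3*x^2 + 2*x^3" by (simp add: power2_eq_square power3_eq_cube algebra_simps)
    moreover have "x^2 \<le> 1/9" using assms(1,2) power_mono[of x "1/3" 2] by (simp add: power2_eq_square)
    moreover have "0 \<le> x^3" using assms(1) by simp
    ultimately show ?thesis by linarith
  qed
  have b: "(1-x)^2 \<ge> 4/9" using assms(1,2) power_mono[of "2/3" "1-x" 2] by (simp add: power2_eq_square)
  have "(1-x)^4 * (1+2*x) = (1-x)^2 * ((1-x)^2 * (1+2*x))" by (simp add: power4_eq_xxxx power2_eq_square algebra_simps)
  also have "\<dots> \<ge> 4/9 * (2/3)" using a b by (intro mult_mono) auto
  finally have c: "(1-x)^4 * (1+2*x) \<ge> 8/27" by simp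
  have "(1-x)^4 \<le> L^4" using assms by (intro power_mono) auto
  then have "(1-x)^4 * (1+2*x) \<le> L^4 * (1+2*x)" using assms(1) by (intro mult_right_mono) auto
  then show ?thesis using c by linarith
qed

theorem lemmaA5:
  fixes alpha beta xh c :: real and n r :: nat
  assumes "alpha > 0" "beta > 0" "xh > 0" "c > 0" "n \<ge> 2"
    and "xh^2 * beta > 3"
    and "real n > 1 / (2 * alpha * xh^2 * beta) - 1 / (xh^2 * beta)"
    and "real n > alpha / (xh^2 * beta)"
    and "real n > alpha / (xh^2 * beta) * (exp (2 / (xh^2 * beta)) - 2) + 1 / (2 * xh^2 * beta)"
    and "1 \<le> r" "r \<le> n"
  shows
    "let eta = sgld_eta alpha beta xh n;
         lam = sgld_lambda alpha beta xh n;
         kdot = 1 / (2 * real n) * log lam (1 / (1 + 1 / (alpha * eta) * (1 - lam^2))) - 1;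
         N = nat \<lceil>kdot\<rceil> * n + n;
         v1 = max 6 (1 + 2 * exp (1 / (xh^2 * beta)))
     in (mu1 alpha beta xh c n N - mu2 alpha beta xh c n r N)^2 / var2 alpha beta xh n r N
        \<ge> exp (- 2 / (xh^2 * beta)) * (alpha / v1) * (3 / (32 * xh^2 * beta))^2 * (c / real n)^2"
proof -
  define A where "A = xh^2 * beta"
  define nA where "nA = real n * xh^2 * beta"
  define M where "M = alpha + real n * xh^2 * beta"
  note B = basics[OF assms(1,2,3,5,6), folded M_def]
  note O = order_facts[OF assms(1,2,3,5,6)]
  note ctx = assms(1,2,4) O(1-4)
  define eta where "eta = sgld_eta alpha beta xh n"
  define lam where "lam = sgld_lambda alpha beta xh n"
  define lh where "lh = sgld_lambda_hat alpha beta xh n"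
  have hA: "A > 3" using assms(6) by (simp add: A_def)
  have nAA: "nA = real n * A" by (simp add: nA_def A_def mult.assoc)
  have MnA: "M = alpha + nA" by (simp add: M_def nA_def)
  have nA6: "nA > 6" using B(5) by (simp add: nA_def)
  have M6: "M > 6" using B(4) .
  have heta: "eta = 2 / M^2" using B(1) by (simp add: eta_def)
  have hlam: "lam = 1 - 1/M" using B(2) by (simp add: lam_def)
  have hlh: "lh = 1 - (alpha + nA/4) / M^2" using B(3) by (simp add: lh_def nA_def)
  have eta0: "eta > 0" and lam0: "lam > 0" and lamlh: "lam \<le> lh" and lh1: "lh < 1" and lh56: "lh \<ge> 5/6"
    using O by (simp_all add: eta_def lam_def lh_def)
  have lam1: "lam < 1" using lamlh lh1 by simp
  have alnA: "alpha < nA"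
  proof -
    have "alpha / A < real n" using assms(8) by (simp add: A_def)
    then show ?thesis using hA by (simp add: nAA pos_divide_less_eq mult.commute)
  qed
  have M2: "M \<le> 2 * nA" using alnA MnA by simp
  have n0: "real n > 0" using assms(5) by simp
  define R where "R = 1 / (1 + 1 / (alpha * eta) * (1 - lam^2))"
  have lsq: "0 < 1 - lam^2"
  proof -
    have "lam * lam < 1 * 1" by (rule mult_strict_mono) (use lam0 lam1 in auto)
    then show ?thesis by (simp add: power2_eq_square)
  qed
  have ae: "alpha * eta > 0" using assms(1) eta0 by simp
  have Rae: "R = alpha * eta / (alpha * eta + (1 - lam^2))"
  proof -
    have "1 + 1 / (alpha * eta) * (1 - lam^2) = (alpha * eta + (1 - lam^2)) / (alpha * eta)"
      using assms(1) eta0 by (simp add: field_simps)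
    then show ?thesis by (simp add: R_def)
  qed
  have R0: "0 < R" using Rae ae lsq by simp
  have R1: "R < 1" using Rae ae lsq by simp
  have logR: "log lam R \<ge> 0"
  proof -
    have "ln R < 0" using R0 R1 by simp
    moreover have "ln lam < 0" using lam0 lam1 by simp
    ultimately have "ln R / ln lam > 0" by (simp add: divide_neg_neg)
    then show ?thesis by (simp add: log_def)
  qed
  define kdot where "kdot = 1 / (2 * real n) * log lam R - 1"
  define K where "K = nat \<lceil>kdot\<rceil>"
  define N where "N = K * n + n"
  have kd1: "2 * real n * (kdot + 1) = log lam R" using n0 by (simp add: kdot_def)
  have kdp: "kdot + 1 \<ge> 0" using kd1 logR n0
    by (metis zero_le_mult_iff not_le mult_pos_pos zero_less_numeral linorder_not_less)
  have Kle: "real K \<le> kdot + 1"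
  proof (cases "\<lceil>kdot\<rceil> \<ge> 0")
    case True
    then have "real K = real_of_int \<lceil>kdot\<rceil>" by (simp add: K_def)
    also have "\<dots> \<le> kdot + 1" by linarith
    finally show ?thesis .
  next
    case False
    then show ?thesis using kdp by (simp add: K_def)
  qed
  have NL: "real N \<le> real n * (kdot + 1) + real n"
  proof -
    have "real N = real K * real n + real n" by (simp add: N_def)
    also have "\<dots> \<le> (kdot + 1) * real n + real n" using Kle n0 by (intro add_right_mono mult_right_mono) auto
    finally show ?thesis by (simp add: mult.commute)
  qed
  define L where "L = lam ^ n"
  have L0: "L > 0" using lam0 by (simp add: L_def)
  have L1: "L \<le> 1" using lam0 lam1 by (simp add: L_def power_le_one)
  have lam2N: "lam ^ (2*N) \<ge> R * L^2"
  proof -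
    have "lam ^ (2*N) = lam powr real (2*N)" by (simp only: powr_realpow[OF lam0])
    also have "\<dots> \<ge> lam powr (2 * real n * (kdot + 1) + 2 * real n)"
      using NL lam0 lam1 by (intro powr_mono') auto
    finally have "lam ^ (2*N) \<ge> lam powr (2 * real n * (kdot + 1)) * lam powr (2 * real n)"
      by (simp add: powr_add)
    moreover have "lam powr (2 * real n * (kdot + 1)) = R" using kd1 lam0 lam1 R0 by simp
    moreover have "lam powr (2 * real n) = L^2"
    proof -
      have "lam powr (2 * real n) = lam powr real (2*n)" by simp
      also have "\<dots> = lam ^ (2*n)" by (simp only: powr_realpow[OF lam0])
      finally show ?thesis by (simp add: L_def power_mult mult.commute)
    qed
    ultimately show ?thesis by simp
  qed
  have Lx: "1 - 1/A \<le> L"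
  proof -
    have "1 + real n * (- (1/M)) \<le> (1 + - (1/M)) ^ n"
      using M6 by (intro Bernoulli_inequality) (simp add: field_simps)
    moreover have "real n / M \<le> 1 / A"
    proof -
      have "real n * A \<le> M" using MnA nAA assms(1) by simp
      then show ?thesis using hA M6 n0 by (simp add: field_simps)
    qed
    ultimately show ?thesis by (simp add: L_def hlam)
  qed
  define p where "p = pp alpha beta xh n r N"
  have p0: "p > 0" using pp_pos[OF ctx] by (simp add: p_def)
  have p2: "p^2 \<ge> R * L^2"
  proof -
    have "lam ^ N \<le> p" using pp_ge[OF ctx] by (simp add: p_def lam_def)
    then have "(lam ^ N)^2 \<le> p^2" using lam0 by (intro power_mono) auto
    then show ?thesis using lam2N by (simp add: power_mult[symmetric] mult.commute)
  qed
  define j0 where "j0 = K * n + (r - 1)"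
  have sm: "small_step n r j0"
  proof -
    have "r - 1 < n" using assms(10,11) by arith
    have "(K*n + (r-1)) mod n = (r-1) mod n" by (rule mod_mult_self3)
    also have "\<dots> = r - 1" using \<open>r - 1 < n\<close> by (rule mod_less)
    finally have "j0 mod n = r - 1" by (simp only: j0_def)
    then show ?thesis unfolding small_step_def using assms(10) by simp
  qed
  have Nj0: "N = Suc j0 + (n - r)" using assms(10,11) by (simp add: N_def j0_def)
  have Nj0': "N = j0 + (n - r + 1)" using assms(10,11) by (simp add: N_def j0_def)
  define dN where "dN = mu1 alpha beta xh c n N - mu2 alpha beta xh c n r N"
  define D where "D = L * (3/8 * eta * nA) * (c * p)"
  have D0: "D > 0" using L0 eta0 nA6 assms(4) p0 by (simp add: D_def)
  have DdN: "D \<le> dN"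
  proof -
    have e1: "c * p \<le> c - mu2 alpha beta xh c n r j0"
    proof -
      have "p \<le> pp alpha beta xh n r j0" using pp_mono[OF ctx, where r=r and j=j0 and m="n - r + 1"] by (simp add: p_def Nj0')
      then have "c * p \<le> c * pp alpha beta xh n r j0" using assms(4) by simp
      also have "\<dots> \<le> c - mu2 alpha beta xh c n r j0" using e_ge[OF ctx] .
      finally show ?thesis .
    qed
    have "3/8 * eta * nA * (c * p) \<le> 3/8 * eta * nA * (c - mu2 alpha beta xh c n r j0)"
      using e1 eta0 nA6 by (intro mult_left_mono) auto
    also have "\<dots> \<le> mu1 alpha beta xh c n (Suc j0) - mu2 alpha beta xh c n r (Suc j0)"
      using d_small[OF ctx sm] by (simp add: eta_def nA_def mult.assoc)
    finally have s1: "3/8 * eta * nA * (c * p) \<le> mu1 alpha beta xh c n (Suc j0) - mu2 alpha beta xh c n r (Suc j0)" .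
    have Ll: "L \<le> lam ^ (n - r)" using lam0 lam1 by (simp add: L_def power_decreasing)
    have "D = L * (3/8 * eta * nA * (c * p))" by (simp add: D_def mult.assoc)
    also have "\<dots> \<le> lam ^ (n - r) * (mu1 alpha beta xh c n (Suc j0) - mu2 alpha beta xh c n r (Suc j0))"
      by (rule mult_mono[OF Ll s1]) (use lam0 eta0 nA6 assms(4) p0 in auto)
    also have "\<dots> \<le> dN" using d_mono[OF ctx, where r=r and m="n - r" and j="Suc j0"] by (simp add: dN_def Nj0 lam_def)
    finally show ?thesis .
  qed
  have D2: "D^2 \<le> dN^2" using DdN D0 by (intro power_mono) auto
  define V where "V = eta / (1 - lh^2)"
  define var where "var = var2 alpha beta xh n r N"
  have var0: "var > 0" using var_pos[OF ctx] by (simp add: var_def)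
  have varle: "var \<le> p^2/alpha + V" using var_le[OF ctx] by (simp add: var_def p_def V_def eta_def lh_def)
  have key: "alpha * eta + (1 - lam^2) \<le> 5 * (1 - lh^2)"
  proof -
    have a1: "alpha * eta + (1 - lam^2) \<le> (2*alpha + 2*M) / M^2"
      using M6 by (simp add: heta hlam field_simps power2_eq_square)
    have a2: "1 - lh^2 = (1 - lh) * (1 + lh)" by (simp add: power2_eq_square algebra_simps)
    have a3: "1 - lh = (alpha + nA/4) / M^2" using hlh by simp
    have a4: "1 - lh > 0" using lh1 by simp
    have "8 * (1 - lh) \<le> (5 * (1 + lh)) * (1 - lh)" using a4 lh56 by (intro mult_right_mono) auto
    then have "8 * (1 - lh) \<le> 5 * (1 - lh^2)" using a2 by (simp add: algebra_simps)
    moreover have "(2*alpha + 2*M) / M^2 \<le> 8 * (1 - lh)"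
      using a3 M6 assms(1) by (simp add: MnA field_simps)
    ultimately show ?thesis using a1 by linarith
  qed
  have lhsq: "0 < 1 - lh^2" using lh_sq[OF ctx] by (simp add: lh_def)
  have aV: "alpha * V \<le> 5 * R"
  proof -
    have "alpha * V = alpha * eta / (1 - lh^2)" by (simp add: V_def)
    also have "\<dots> \<le> alpha * eta / ((alpha * eta + (1 - lam^2)) / 5)"
      using key ae lsq by (intro divide_left_mono) auto
    also have "\<dots> = 5 * R" by (simp add: Rae)
    finally show ?thesis .
  qed
  define Y where "Y = L^2 + 5"
  have Y0: "Y > 0" unfolding Y_def by (smt (verit) zero_le_power2)
  define W where "W = p^2 * Y / (alpha * L^2)"
  have varW: "var \<le> W"
  proof -
    have "V \<le> 5 * R / alpha" using aV assms(1) by (simp add: field_simps)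
    also have "\<dots> \<le> 5 * (p^2 / L^2) / alpha"
      using p2 L0 assms(1) by (intro divide_right_mono mult_left_mono) (auto simp: field_simps)
    finally have "V \<le> 5 * (p^2 / L^2) / alpha" .
    then have "var \<le> p^2/alpha + 5 * (p^2 / L^2) / alpha" using varle by linarith
    also have "\<dots> = W" using L0 assms(1) by (simp add: W_def Y_def field_simps)
    finally show ?thesis .
  qed
  have ratio: "D^2 / W \<le> dN^2 / var"
    using D2 var0 varW D0 by (intro frac_le) auto
  have DW: "D^2 / W = 9/16 * L^4 * nA^2 * c^2 * alpha / (M^4 * Y)"
    using L0 p0 assms(1) M6 Y0
    by (simp add: D_def W_def heta field_simps power2_eq_square power4_eq_xxxx)
  define G where "G = alpha * c^2 / (real n ^ 2 * A^2)"
  have G0: "G > 0" using assms(1,4) n0 hA by (simp add: G_def)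
  have lower: "3/512 * L^4 * G \<le> D^2 / W"
  proof -
    have M4: "M^4 \<le> 16 * nA^4"
    proof -
      have "M^4 \<le> (2*nA)^4" using M2 M6 by (intro power_mono) auto
      then show ?thesis by simp
    qed
    have L5: "Y \<le> 6" using L1 L0 by (simp add: Y_def power_le_one)
    have "M^4 * Y \<le> 16 * nA^4 * 6"
      using M4 L5 L0 M6 Y0 by (intro mult_mono) auto
    then have "9/16 * L^4 * nA^2 * c^2 * alpha / (16 * nA^4 * 6) \<le> 9/16 * L^4 * nA^2 * c^2 * alpha / (M^4 * Y)"
      using L0 nA6 assms(1,4) M6 Y0 by (intro divide_left_mono mult_pos_pos) auto
    moreover have "9/16 * L^4 * nA^2 * c^2 * alpha / (16 * nA^4 * 6) = 3/512 * L^4 * G"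
      using nA6 n0 hA by (simp add: G_def nAA field_simps power2_eq_square power4_eq_xxxx)
    ultimately show ?thesis using DW by linarith
  qed
  define v1 where "v1 = max 6 (1 + 2 * exp (1 / (xh^2 * beta)))"
  have upper: "exp (- 2 / (xh^2 * beta)) * (alpha / v1) * (3 / (32 * xh^2 * beta))^2 * (c / real n)^2
      \<le> exp (- 2 / A) * (9/6144) * G"
  proof -
    have "alpha / v1 \<le> alpha / 6" using assms(1) by (intro divide_left_mono) (auto simp: v1_def)
    then have "exp (- 2 / A) * (alpha / v1) * (3 / (32 * A))^2 * (c / real n)^2
       \<le> exp (- 2 / A) * (alpha / 6) * (3 / (32 * A))^2 * (c / real n)^2"
      by (intro mult_right_mono mult_left_mono) auto
    also have "\<dots> = exp (- 2 / A) * (9/6144) * G" using hA n0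
      by (simp add: G_def field_simps power2_eq_square)
    finally show ?thesis by (simp add: A_def mult.assoc)
  qed
  have expb: "exp (- 2 / A) * (9/6144) \<le> 3/512 * L^4"
  proof -
    have x: "1 \<le> 4 * L^4 * (1 + 2 * (1/A))" using hA Lx by (intro poly_bound) (auto simp: field_simps)
    have "1 + 2/A \<le> exp (2/A)" by (rule exp_ge_add_one_self)
    then have "exp (- 2 / A) \<le> 1 / (1 + 2/A)" using hA
      by (simp add: exp_minus field_simps)
    also have "\<dots> \<le> 4 * L^4" using x hA by (simp add: field_simps)
    finally show ?thesis by simp
  qed
  have final: "exp (- 2 / (xh^2 * beta)) * (alpha / v1) * (3 / (32 * xh^2 * beta))^2 * (c / real n)^2
      \<le> dN^2 / var"
  proof -
    have "exp (- 2 / A) * (9/6144) * G \<le> 3/512 * L^4 * G" using expb G0 by (intro mult_right_mono) auto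
    then show ?thesis using upper lower ratio by linarith
  qed
  show ?thesis unfolding Let_def
    using final by (simp only: dN_def var_def N_def K_def kdot_def R_def eta_def lam_def v1_def)
qed

end
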